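(* Let $n\ge 1$ and $h\ge 1$ be integers. Let $\mathcal{B}$ be the set of $(2n+1)\times(2n+1)$ integer matrices $B=(B_{i,j})_{i,j\in\{-n,\ldots,n\}}$ (rows and columns indexed by $-n,\ldots,n$) such that: $B_{i,i+1}=1$ for $i\in\{-n,\ldots,0\}$; $B_{i,i+1}=h$ for $i\in\{1,\ldots,n-1\}$; $B_{i,j}\in\{0,1,\ldots,h-1\}$ for $i\in\{1,\ldots,n\}$ and $j\in\{-n,\ldots,-1\}$ (these $n^2$ entries are arbitrary in this range); and all other entries of $B$ are $0$. Let $\mathcal{P}$ be the set of monic integer polynomials of the form $$t^{2n+1}-a_{2n-2}t^{2n-2}-a_{2n-3}t^{2n-3}-\cdots-a_1t-a_0$$ (so the coefficients of $t^{2n}$ and $t^{2n-1}$ are zero) where $a_{2n-k}\in\{0,1,\ldots,h^{k-1}-1\}$ for each $k\in\{2,\ldots,n+1\}$, and $a_{n-k}/h^{k-1}\in\{0,1,\ldots,h^{n-k+1}-1\}$ for each $k\in\{2,\ldots,n\}$. Then the map $B\mapsto\det(tI-B)$ is a bijection from $\mathcal{B}$ onto $\mathcal{P}$.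
   Context: $\det(tI-B)$ is the (monic) characteristic polynomial of $B$. *)

theory Defs
  imports "Jordan_Normal_Form.Char_Poly"
begin

text \<open>A (2n+1)x(2n+1) matrix with rows/columns indexed by -n..n is represented as an
  int mat of dimension 2n+1, where paper index i corresponds to position i + n.\<close>

definition ent :: "nat \<Rightarrow> int mat \<Rightarrow> int \<Rightarrow> int \<Rightarrow> int" where
  "ent n B i j = B $$ (nat (i + int n), nat (j + int n))"

definition Bset :: "nat \<Rightarrow> int \<Rightarrow> int mat set" where
  "Bset n h = {B \<in> carrier_mat (2*n+1) (2*n+1).
     \<forall>i\<in>{-int n..int n}. \<forall>j\<in>{-int n..int n}.
       (if j = i + 1 \<and> i \<le> 0 then ent n B i j = 1
        else if j = i + 1 \<and> 1 \<le> i \<and> i \<le> int n - 1 then ent n B i j = h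
        else if 1 \<le> i \<and> j \<le> -1 then ent n B i j \<in> {0..h-1}
        else ent n B i j = 0)}"

text \<open>p = t^(2n+1) - a_(2n-2) t^(2n-2) - ... - a_0, i.e. a_m = - coeff p m.\<close>

definition Pset :: "nat \<Rightarrow> int \<Rightarrow> int poly set" where
  "Pset n h = {p. degree p = 2*n+1 \<and> coeff p (2*n+1) = 1 \<and>
     coeff p (2*n) = 0 \<and> coeff p (2*n-1) = 0 \<and>
     (\<forall>k\<in>{2..n+1}. - coeff p (2*n-k) \<in> {0..h^(k-1)-1}) \<and>
     (\<forall>k\<in>{2..n}. \<exists>c\<in>{0..h^(n-k+1)-1}. - coeff p (n-k) = c * h^(k-1))}"

end

theory Submission
  imports Defs
begin

lemma hess_det:
  fixes A :: "'a :: comm_ring_1 mat" and u :: "nat \<Rightarrow> 'a"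
  assumes A: "A \<in> carrier_mat (Suc N) (Suc N)"
    and Z: "\<And>i j. i < N \<Longrightarrow> j < Suc N \<Longrightarrow> Suc i < j \<Longrightarrow> A $$ (i,j) = 0"
    and U: "\<And>i. i < Suc N \<Longrightarrow> (\<Sum>j<Suc N. A $$ (i,j) * u j) = (if i = N then q else 0)"
  shows "det A * u 0 = (-1)^N * q * (\<Prod>i<N. A $$ (i, Suc i))"
proof -
  define E where "E = mat (Suc N) (Suc N) (\<lambda>(i,j). if j = 0 then u i else if i = j then 1 else 0)"
  have E: "E \<in> carrier_mat (Suc N) (Suc N)" unfolding E_def by auto
  have "det E = prod_list (diag_mat E)"
    by (rule det_lower_triangular[OF _ E]) (auto simp: E_def)
  also have "\<dots> = u 0" unfolding prod_list_diag_prod using E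
    by (simp add: E_def prod.atLeast0_lessThan_Suc_shift del: prod.op_ivl_Suc)
  finally have dE: "det E = u 0" .
  have AE: "A * E \<in> carrier_mat (Suc N) (Suc N)" using A E by auto
  have col0: "(A * E) $$ (i, 0) = (if i = N then q else 0)" if "i < Suc N" for i
  proof -
    have "(A * E) $$ (i, 0) = (\<Sum>j<Suc N. A $$ (i,j) * u j)"
      using A E that by (simp add: scalar_prod_def E_def lessThan_atLeast0)
    then show ?thesis using U[OF that] by simp
  qed
  have colj: "(A * E) $$ (i, Suc j) = A $$ (i, Suc j)" if "i < Suc N" "j < N" for i j
  proof -
    have "(A * E) $$ (i, Suc j) = (\<Sum>k\<in>{0..<Suc N}. A $$ (i,k) * (if k = Suc j then 1 else 0))"
      using A E that by (simp add: scalar_prod_def E_def)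
    also have "\<dots> = A $$ (i, Suc j)" using that by (simp add: if_distrib[of "\<lambda>x. _ * x"] cong: if_cong)
    finally show ?thesis .
  qed
  have "det (A * E) = (\<Sum>i<Suc N. (A * E) $$ (i,0) * cofactor (A * E) i 0)"
    by (rule laplace_expansion_column[OF AE]) simp
  also have "\<dots> = (\<Sum>i<Suc N. (if i = N then q * cofactor (A * E) N 0 else 0))"
    by (rule sum.cong) (auto simp: col0)
  also have "\<dots> = q * cofactor (A * E) N 0" by simp
  also have "cofactor (A * E) N 0 = (-1)^N * det (mat_delete (A * E) N 0)"
    by (simp add: cofactor_def)
  also have "det (mat_delete (A * E) N 0) = prod_list (diag_mat (mat_delete (A * E) N 0))"
  proof (rule det_lower_triangular[of N])
    show "mat_delete (A * E) N 0 \<in> carrier_mat N N" using mat_delete_carrier[OF AE] by simp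
    fix i j assume ij: "i < j" "j < N"
    then show "mat_delete (A * E) N 0 $$ (i, j) = 0"
      using A E colj Z[of i "Suc j"] by (simp add: mat_delete_def)
  qed
  also have "\<dots> = (\<Prod>i<N. A $$ (i, Suc i))"
    unfolding prod_list_diag_prod using A E colj
    by (auto simp: mat_delete_def lessThan_atLeast0 intro!: prod.cong)
  finally have "det (A * E) = q * ((-1)^N * (\<Prod>i<N. A $$ (i, Suc i)))" .
  moreover have "det (A * E) = det A * det E" by (rule det_mult[OF A E])
  ultimately show ?thesis using dE by (simp add: ac_simps)
qed


definition wpol :: "nat \<Rightarrow> int \<Rightarrow> int mat \<Rightarrow> nat \<Rightarrow> int poly" where
  "wpol n h B p = monom 1 p - (\<Sum>k<p-n-1. \<Sum>s<n. monom (h^k * B $$ (n+1+k, s)) (s + (p-n-2-k)))"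

definition upol :: "nat \<Rightarrow> int \<Rightarrow> int mat \<Rightarrow> nat \<Rightarrow> int poly" where
  "upol n h B p = Polynomial.smult (h ^ (if p \<le> n then n-1 else 2*n-p)) (wpol n h B p)"

lemma wpol_small: "p \<le> n+1 \<Longrightarrow> wpol n h B p = monom 1 p"
  unfolding wpol_def by simp

lemma x_monom: "[:0,1:] * monom (c::'a::comm_ring_1) e = monom c (Suc e)"
  by (metis monom_Suc mult.commute mult_1 mult_pCons_right pCons_0_as_mult smult_1_left)

lemma wpol_Suc:
  assumes "n+1 \<le> p"
  shows "wpol n h B (Suc p) = [:0,1:] * wpol n h B p - (\<Sum>s<n. monom (h^(p-n-1) * B $$ (p,s)) s)"
proof -
  have e: "Suc p - n - 1 = Suc (p-n-1)" using assms by simp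
  have "(\<Sum>k<Suc p-n-1. \<Sum>s<n. monom (h^k * B $$ (n+1+k, s)) (s + (Suc p-n-2-k)))
     = (\<Sum>k<p-n-1. \<Sum>s<n. monom (h^k * B $$ (n+1+k, s)) (s + (Suc p-n-2-k)))
       + (\<Sum>s<n. monom (h^(p-n-1) * B $$ (p,s)) s)"
    unfolding e using assms by simp
  also have "(\<Sum>k<p-n-1. \<Sum>s<n. monom (h^k * B $$ (n+1+k, s)) (s + (Suc p-n-2-k)))
     = [:0,1:] * (\<Sum>k<p-n-1. \<Sum>s<n. monom (h^k * B $$ (n+1+k, s)) (s + (p-n-2-k)))"
    unfolding sum_distrib_left x_monom
    by (intro sum.cong refl arg_cong2[where f=monom]) auto
  finally have S: "(\<Sum>k<Suc p-n-1. \<Sum>s<n. monom (h^k * B $$ (n+1+k, s)) (s + (Suc p-n-2-k)))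
     = [:0,1:] * (\<Sum>k<p-n-1. \<Sum>s<n. monom (h^k * B $$ (n+1+k, s)) (s + (p-n-2-k)))
       + (\<Sum>s<n. monom (h^(p-n-1) * B $$ (p,s)) s)" .
  have "wpol n h B (Suc p) = [:0,1:] * monom 1 p - ([:0,1:] * (\<Sum>k<p-n-1. \<Sum>s<n. monom (h^k * B $$ (n+1+k, s)) (s + (p-n-2-k)))
       + (\<Sum>s<n. monom (h^(p-n-1) * B $$ (p,s)) s))"
    unfolding wpol_def S x_monom ..
  then show ?thesis unfolding wpol_def by (simp only: right_diff_distrib diff_diff_eq)
qed


lemma Bset_carrier: "B \<in> Bset n h \<Longrightarrow> B \<in> carrier_mat (2*n+1) (2*n+1)"
  unfolding Bset_def by auto

lemma Bset_entry:
  assumes B: "B \<in> Bset n h" and p: "p < 2*n+1" and j: "j < 2*n+1"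
  shows "B $$ (p,j) = (if j = Suc p \<and> p \<le> n then 1
           else if j = Suc p \<and> n+1 \<le> p then h
           else if n+1 \<le> p \<and> j < n then B $$ (p,j) else 0)"
    and "n+1 \<le> p \<Longrightarrow> j < n \<Longrightarrow> B $$ (p,j) \<in> {0..h-1}"
proof -
  have P: "\<forall>i\<in>{-int n..int n}. \<forall>j\<in>{-int n..int n}.
       (if j = i + 1 \<and> i \<le> 0 then ent n B i j = 1
        else if j = i + 1 \<and> 1 \<le> i \<and> i \<le> int n - 1 then ent n B i j = h
        else if 1 \<le> i \<and> j \<le> -1 then ent n B i j \<in> {0..h-1}
        else ent n B i j = 0)" using B unfolding Bset_def by blast
  have e: "ent n B (int p - int n) (int j - int n) = B $$ (p,j)" unfolding ent_def by simp
  have Q: "(if int j - int n = int p - int n + 1 \<and> int p - int n \<le> 0 then B $$ (p,j) = 1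
        else if int j - int n = int p - int n + 1 \<and> 1 \<le> int p - int n \<and> int p - int n \<le> int n - 1 then B $$ (p,j) = h
        else if 1 \<le> int p - int n \<and> int j - int n \<le> -1 then B $$ (p,j) \<in> {0..h-1}
        else B $$ (p,j) = 0)"
    using P[rule_format, of "int p - int n" "int j - int n"] p j unfolding e by auto
  have jj: "(int j - int n = int p - int n + 1) = (j = Suc p)" by auto
  note Q = Q[unfolded jj]
  show "B $$ (p,j) = (if j = Suc p \<and> p \<le> n then 1
           else if j = Suc p \<and> n+1 \<le> p then h
           else if n+1 \<le> p \<and> j < n then B $$ (p,j) else 0)"
    using Q p j by (auto split: if_splits)
  show "n+1 \<le> p \<Longrightarrow> j < n \<Longrightarrow> B $$ (p,j) \<in> {0..h-1}"
    using Q p j by (auto split: if_splits)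
qed


lemma cpm_entry: "B \<in> carrier_mat m m \<Longrightarrow> p < m \<Longrightarrow> j < m \<Longrightarrow>
  char_poly_matrix B $$ (p,j) = (if p = j then [:0,1:] else 0) + [:- B $$ (p,j):]"
  unfolding char_poly_matrix_def by auto

lemma sum_restrict_less:
  fixes n m :: nat
  assumes "n \<le> m"
  shows "(\<Sum>j<m. if j < n then f j else 0) = (\<Sum>j<n. f j)"
  apply (rule sum.mono_neutral_cong_right)
  using assms by auto

lemma row_sum_B:
  fixes u :: "nat \<Rightarrow> int poly"
  assumes B: "B \<in> Bset n h" and p: "p < 2*n+1" and n: "n \<ge> 1"
  shows "(\<Sum>j<2*n+1. Polynomial.smult (B $$ (p,j)) (u j)) =
     (if p \<le> n then u (Suc p)
      else (if Suc p < 2*n+1 then Polynomial.smult h (u (Suc p)) else 0) + (\<Sum>s<n. Polynomial.smult (B $$ (p,s)) (u s)))"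
proof -
  define c where "c = (if p \<le> n then 1 else h)"
  have "(\<Sum>j<2*n+1. Polynomial.smult (B $$ (p,j)) (u j)) =
    (\<Sum>j<2*n+1. (if j = Suc p then Polynomial.smult c (u j) else 0) +
       (if j < n then (if n+1 \<le> p then Polynomial.smult (B $$ (p,j)) (u j) else 0) else 0))"
  proof (rule sum.cong[OF refl])
    fix j assume j: "j \<in> {..<2*n+1}"
    show "Polynomial.smult (B $$ (p,j)) (u j) = (if j = Suc p then Polynomial.smult c (u j) else 0) +
       (if j < n then (if n+1 \<le> p then Polynomial.smult (B $$ (p,j)) (u j) else 0) else 0)"
      using Bset_entry(1)[OF B p, of j] j unfolding c_def by (auto split: if_splits)
  qed
  also have "\<dots> = (if Suc p < 2*n+1 then Polynomial.smult c (u (Suc p)) else 0) +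
      (if n+1 \<le> p then (\<Sum>s<n. Polynomial.smult (B $$ (p,s)) (u s)) else 0)"
    unfolding sum.distrib by (subst sum_restrict_less) (auto simp: sum.delta)
  finally show ?thesis using p n unfolding c_def by auto
qed


lemma smult_sum_right: "Polynomial.smult a (\<Sum>i \<in> S. f i) = (\<Sum>i \<in> S. Polynomial.smult a (f i))"
  by (induct S rule: infinite_finite_induct) (auto simp: smult_add_right)

lemma upol_small: "s \<le> n \<Longrightarrow> upol n h B s = monom (h^(n-1)) s"
  unfolding upol_def by (simp add: wpol_small smult_monom)

lemma row_eq:
  assumes B: "B \<in> Bset n h" and p: "p < 2*n+1" and n: "n \<ge> 1"
  shows "(\<Sum>j<2*n+1. char_poly_matrix B $$ (p,j) * upol n h B j) = (if p = 2*n then wpol n h B (2*n+1) else 0)"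
proof -
  let ?u = "upol n h B"
  let ?w = "wpol n h B"
  have Bc: "B \<in> carrier_mat (2*n+1) (2*n+1)" by (rule Bset_carrier[OF B])
  have "(\<Sum>j<2*n+1. char_poly_matrix B $$ (p,j) * ?u j) =
        (\<Sum>j<2*n+1. (if j = p then [:0,1:] * ?u j else 0) - Polynomial.smult (B $$ (p,j)) (?u j))"
    by (rule sum.cong[OF refl]) (use Bc p in \<open>auto simp: cpm_entry\<close>)
  also have "\<dots> = [:0,1:] * ?u p - (\<Sum>j<2*n+1. Polynomial.smult (B $$ (p,j)) (?u j))"
    unfolding sum_subtractf using p by (simp add: sum.delta')
  also have "\<dots> = [:0,1:] * ?u p - (if p \<le> n then ?u (Suc p)
      else (if Suc p < 2*n+1 then Polynomial.smult h (?u (Suc p)) else 0) + (\<Sum>s<n. Polynomial.smult (B $$ (p,s)) (?u s)))"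
    unfolding row_sum_B[OF B p n] ..
  also have "\<dots> = (if p = 2*n then ?w (2*n+1) else 0)"
  proof -
    have SU: "(\<Sum>s<n. Polynomial.smult (B $$ (p,s)) (?u s)) = (\<Sum>s<n. monom (h^(n-1) * B $$ (p,s)) s)"
      by (rule sum.cong[OF refl]) (simp add: upol_small smult_monom mult.commute)
    consider "p \<le> n" | "n+1 \<le> p" "Suc p < 2*n+1" | "p = 2*n" using p by linarith
    then show ?thesis
    proof cases
      case 1
      then consider "p < n" | "p = n" by linarith
      then show ?thesis using n
        by cases (simp_all add: upol_def wpol_small x_monom del: mult_pCons_left)
    next
      case 2
      have e1: "2*n - p = Suc (2*n - Suc p)" using 2 by simp
      have e2: "h^(2*n-p) * h^(p-n-1) = h^(n-1)"
        unfolding power_add[symmetric] using 2 by (simp add: algebra_simps)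
      have "Polynomial.smult h (?u (Suc p)) = Polynomial.smult (h^(2*n-p)) (?w (Suc p))"
        unfolding upol_def using 2 e1 by simp
      also have "\<dots> = Polynomial.smult (h^(2*n-p)) ([:0,1:] * ?w p) -
          (\<Sum>s<n. monom (h^(n-1) * B $$ (p,s)) s)"
        unfolding wpol_Suc[of n p, OF 2(1)] smult_diff_right smult_sum_right smult_monom
          mult.assoc[symmetric] e2 ..
      finally have "Polynomial.smult h (?u (Suc p)) = [:0,1:] * ?u p - (\<Sum>s<n. monom (h^(n-1) * B $$ (p,s)) s)"
        unfolding upol_def using 2 by (simp del: mult_pCons_left)
      then show ?thesis using 2 SU by simp
    next
      case 3
      have "?w (2*n+1) = [:0,1:] * ?w (2*n) - (\<Sum>s<n. monom (h^(n-1) * B $$ (2*n,s)) s)"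
        using wpol_Suc[of n "2*n" h B] n by simp
      then show ?thesis using 3 n SU unfolding upol_def by (simp del: mult_pCons_left)
    qed
  qed
  finally show ?thesis .
qed


lemma prod_const_poly: "(\<Prod>i<(m::nat). [:f i:]) = [:(\<Prod>i<m. f i):]"
  by (induct m) (auto simp: mult.commute)

lemma prod_c: "(\<Prod>i<m. - (if i \<le> n then 1 else h)) = (-1)^m * (h::int)^(m-(n+1))"
proof (induct m)
  case (Suc m)
  show ?case
  proof (cases "m \<le> n")
    case True
    then show ?thesis using Suc by (simp add: Suc_diff_le)
  next
    case False
    then have "Suc m - (n+1) = Suc (m - (n+1))" by simp
    then show ?thesis using Suc False by (simp add: mult.commute)
  qed
qed simp

lemma char_poly_formula:
  assumes B: "B \<in> Bset n h" and n: "n \<ge> 1" and h: "h \<ge> 1"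
  shows "char_poly B = wpol n h B (2*n+1)"
proof -
  let ?A = "char_poly_matrix B"
  have Bc: "B \<in> carrier_mat (Suc (2*n)) (Suc (2*n))" using Bset_carrier[OF B] by simp
  have A: "?A \<in> carrier_mat (Suc (2*n)) (Suc (2*n))" using Bc by simp
  have main: "det ?A * upol n h B 0 = (-1)^(2*n) * wpol n h B (2*n+1) * (\<Prod>i<2*n. ?A $$ (i, Suc i))"
  proof (rule hess_det[OF A])
    fix i j assume ij: "i < 2*n" "j < Suc (2*n)" "Suc i < j"
    then show "?A $$ (i,j) = 0"
      using Bset_entry(1)[OF B, of i j] cpm_entry[OF Bc, of i j] by (auto split: if_splits)
  next
    fix i assume "i < Suc (2*n)"
    then show "(\<Sum>j<Suc (2*n). ?A $$ (i,j) * upol n h B j) = (if i = 2*n then wpol n h B (2*n+1) else 0)"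
      using row_eq[OF B _ n, of i] by simp
  qed
  have P: "(\<Prod>i<2*n. ?A $$ (i, Suc i)) = [:h^(n-1):]"
  proof -
    have "(\<Prod>i<2*n. ?A $$ (i, Suc i)) = (\<Prod>i<2*n. [:- (if i \<le> n then 1 else h):])"
    proof (rule prod.cong[OF refl])
      fix i assume i: "i \<in> {..<2*n}"
      have "B $$ (i, Suc i) = (if i \<le> n then 1 else h)"
        using Bset_entry(1)[OF B, of i "Suc i"] i by auto
      then show "?A $$ (i, Suc i) = [:- (if i \<le> n then 1 else h):]"
        using cpm_entry[OF Bc, of i "Suc i"] i by simp
    qed
    also have "\<dots> = [:h^(n-1):]" unfolding prod_const_poly prod_c by simp
    finally show ?thesis .
  qed
  have u0: "upol n h B 0 = [:h^(n-1):]" by (simp add: upol_small monom_0)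
  have "det ?A * [:h^(n-1):] = wpol n h B (2*n+1) * [:h^(n-1):]"
    using main unfolding P u0 by simp
  moreover have "[:h^(n-1):] \<noteq> 0" using h by simp
  ultimately show ?thesis unfolding char_poly_def by (metis mult_right_cancel)
qed


lemma dig_bound:
  fixes h :: int
  assumes h: "h \<ge> 1" and x: "\<And>k. k < U \<Longrightarrow> x k \<in> {0..h-1}"
  shows "(\<Sum>k<U. h^k * x k) \<in> {0..h^U-1}"
  using x
proof (induct U)
  case (Suc U)
  have IH: "(\<Sum>k<U. h^k * x k) \<in> {0..h^U-1}" using Suc by auto
  have xu: "x U \<in> {0..h-1}" using Suc by auto
  have "h^U * x U \<le> h^U * (h-1)" using xu h by (intro mult_left_mono) auto
  moreover have "0 \<le> h^U * x U" using xu h by simp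
  ultimately show ?case using IH by (auto simp: algebra_simps)
qed simp

lemma dig_unique:
  fixes h :: int
  assumes h: "h \<ge> 1" and x: "\<And>k. k < U \<Longrightarrow> x k \<in> {0..h-1}"
    and y: "\<And>k. k < U \<Longrightarrow> y k \<in> {0..h-1}"
    and eq: "(\<Sum>k<U. h^k * x k) = (\<Sum>k<U. h^k * y k)"
  shows "\<forall>k<U. x k = y k"
  using x y eq
proof (induct U)
  case (Suc U)
  have bx: "(\<Sum>k<U. h^k * x k) \<in> {0..h^U-1}" using Suc.prems by (intro dig_bound[OF h]) auto
  have by': "(\<Sum>k<U. h^k * y k) \<in> {0..h^U-1}" using Suc.prems by (intro dig_bound[OF h]) auto
  have hU: "h^U > 0" using h by simp
  have d: "((\<Sum>k<U. h^k * z k) + h^U * z U) div h^U = z U" if "(\<Sum>k<U. h^k * z k) \<in> {0..h^U-1}" for z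
  proof -
    have "((\<Sum>k<U. h^k * z k) + z U * h^U) div h^U = z U + (\<Sum>k<U. h^k * z k) div h^U"
      using hU by (metis div_mult_self1 less_irrefl add.commute)
    also have "(\<Sum>k<U. h^k * z k) div h^U = 0" using that by (intro div_pos_pos_trivial) auto
    finally show ?thesis by (simp add: mult.commute)
  qed
  have e: "(\<Sum>k<U. h^k * x k) + h^U * x U = (\<Sum>k<U. h^k * y k) + h^U * y U" using Suc.prems(3) by simp
  have xu: "x U = y U" using d[of x, OF bx] d[of y, OF by'] e by simp
  then have eqU: "(\<Sum>k<U. h^k * x k) = (\<Sum>k<U. h^k * y k)" using e by simp
  have "\<forall>k<U. x k = y k"
  proof (rule Suc.hyps)
    fix k assume "k < U" then show "x k \<in> {0..h-1}" using Suc.prems(1) by simp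
  next
    fix k assume "k < U" then show "y k \<in> {0..h-1}" using Suc.prems(2) by simp
  qed (rule eqU)
  then show ?case using xu less_Suc_eq by auto
qed simp

lemma dig_exist:
  fixes h :: int
  assumes h: "h \<ge> 1"
  shows "(\<Sum>k<U. h^k * ((a div h^k) mod h)) = a mod h^U"
proof (induct U)
  case (Suc U)
  have "a mod h^(Suc U) = h^U * (a div h^U mod h) + a mod h^U"
    unfolding power_Suc2 using h by (intro zmod_zmult2_eq) simp
  then show ?case using Suc by simp
qed simp

lemma sum_shift_ivl:
  fixes L U :: nat
  assumes "L \<le> U"
  shows "(\<Sum>k\<in>{L..<U}. f k) = (\<Sum>k<U-L. f (k+L))"
  using sum.shift_bounds_nat_ivl[of f 0 L "U-L"] assms by (simp add: lessThan_atLeast0)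

lemma digL_bound:
  fixes h :: int
  assumes h: "h \<ge> 1" and LU: "L \<le> U" and x: "\<And>k. k \<in> {L..<U} \<Longrightarrow> x k \<in> {0..h-1}"
  shows "\<exists>c\<in>{0..h^(U-L)-1}. (\<Sum>k\<in>{L..<U}. h^k * x k) = c * h^L"
proof -
  have "(\<Sum>k\<in>{L..<U}. h^k * x k) = (\<Sum>k<U-L. h^L * (h^k * x (k+L)))"
    unfolding sum_shift_ivl[OF LU] by (simp add: power_add ac_simps)
  also have "\<dots> = (\<Sum>k<U-L. h^k * x (k+L)) * h^L" by (simp add: sum_distrib_left mult.commute)
  finally show ?thesis using dig_bound[OF h, of "U-L" "\<lambda>k. x (k+L)"] x by auto
qed

lemma digL_unique:
  fixes h :: int
  assumes h: "h \<ge> 1" and LU: "L \<le> U" and x: "\<And>k. k \<in> {L..<U} \<Longrightarrow> x k \<in> {0..h-1}"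
    and y: "\<And>k. k \<in> {L..<U} \<Longrightarrow> y k \<in> {0..h-1}"
    and eq: "(\<Sum>k\<in>{L..<U}. h^k * x k) = (\<Sum>k\<in>{L..<U}. h^k * y k)"
    and k: "k \<in> {L..<U}"
  shows "x k = y k"
proof -
  have r: "(\<Sum>k\<in>{L..<U}. h^k * z k) = h^L * (\<Sum>k<U-L. h^k * z (k+L))" for z
    unfolding sum_shift_ivl[OF LU] by (simp add: power_add ac_simps sum_distrib_left)
  have h0: "h \<noteq> 0" using h by simp
  have "h^L \<noteq> 0" using h by simp
  then have "(\<Sum>k<U-L. h^k * x (k+L)) = (\<Sum>k<U-L. h^k * y (k+L))" using eq h0 unfolding r by simp
  then have "\<forall>j<U-L. x (j+L) = y (j+L)"
    using x y by (intro dig_unique[OF h]) auto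
  moreover have "k - L < U - L" "k - L + L = k" using k by auto
  ultimately show ?thesis by metis
qed

lemma digL_exist:
  fixes h :: int
  assumes h: "h \<ge> 1" and LU: "L \<le> U" and c: "c \<in> {0..h^(U-L)-1}"
  shows "(\<Sum>k\<in>{L..<U}. h^k * ((c * h^L) div h^k mod h)) = c * h^L"
proof -
  have hp: "h^L > 0" using h by simp
  have "(\<Sum>k\<in>{L..<U}. h^k * ((c * h^L) div h^k mod h)) = (\<Sum>k<U-L. h^L * (h^k * (c div h^k mod h)))"
    unfolding sum_shift_ivl[OF LU]
  proof (rule sum.cong[OF refl])
    fix k
    have "(c * h^L) div h^(k+L) = c div h^k"
      unfolding power_add using hp h by (metis div_mult_mult2 less_irrefl)
    then show "h^(k+L) * ((c * h^L) div h^(k+L) mod h) = h^L * (h^k * (c div h^k mod h))"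
      by (simp add: power_add ac_simps)
  qed
  also have "\<dots> = h^L * (c mod h^(U-L))" unfolding sum_distrib_left[symmetric] dig_exist[OF h] ..
  also have "c mod h^(U-L) = c" using c by (intro mod_pos_pos_trivial) auto
  finally show ?thesis by simp
qed


lemma inner_delta:
  fixes f :: "nat \<Rightarrow> 'a::comm_monoid_add"
  assumes k: "k < n"
  shows "(\<Sum>s<n. if s + (n-1-k) = m then f s else 0) =
         (if n-1-k \<le> m \<and> m+k+1-n < n then f (m+k+1-n) else 0)"
proof (cases "n-1-k \<le> m")
  case True
  have "(\<Sum>s<n. if s + (n-1-k) = m then f s else 0) = (\<Sum>s<n. if s = m+k+1-n then f s else 0)"
    by (rule sum.cong[OF refl]) (use True k in auto)
  then show ?thesis using True by (simp add: sum.delta)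
next
  case False
  then show ?thesis by (intro trans[OF sum.neutral]) auto
qed

lemma coeff_formula:
  assumes B: "B \<in> Bset n h" and n: "n \<ge> 1" and h: "h \<ge> 1"
  shows "coeff (char_poly B) m = (if m = 2*n+1 then 1 else 0) -
     (\<Sum>k\<in>{n-1-m..<min n (2*n-1-m)}. h^k * B $$ (n+1+k, m+k+1-n))"
proof -
  have "char_poly B = monom 1 (2*n+1) - (\<Sum>k<n. \<Sum>s<n. monom (h^k * B $$ (n+1+k, s)) (s + (n-1-k)))"
    unfolding char_poly_formula[OF B n h] wpol_def
    by (intro arg_cong2[where f="(-)"] refl sum.cong arg_cong2[where f=monom]) auto
  then have "coeff (char_poly B) m = (if m = 2*n+1 then 1 else 0) -
     (\<Sum>k<n. \<Sum>s<n. if s + (n-1-k) = m then h^k * B $$ (n+1+k, s) else 0)"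
    by (auto simp: coeff_sum coeff_monom coeff_diff intro!: sum.cong)
  also have "(\<Sum>k<n. \<Sum>s<n. if s + (n-1-k) = m then h^k * B $$ (n+1+k, s) else 0)
     = (\<Sum>k<n. if n-1-k \<le> m \<and> m+k+1-n < n then h^k * B $$ (n+1+k, m+k+1-n) else 0)"
    by (rule sum.cong[OF refl], rule inner_delta[where f="\<lambda>s. h^_ * B $$ (_, s)"]) simp
  also have "\<dots> = (\<Sum>k\<in>{k\<in>{..<n}. n-1-k \<le> m \<and> m+k+1-n < n}. h^k * B $$ (n+1+k, m+k+1-n))"
    by (rule sum.inter_filter[symmetric]) simp
  also have "{k\<in>{..<n}. n-1-k \<le> m \<and> m+k+1-n < n} = {n-1-m..<min n (2*n-1-m)}"
    by auto
  finally show ?thesis .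
qed


abbreviation Iset :: "nat \<Rightarrow> nat \<Rightarrow> nat set" where
  "Iset n m \<equiv> {n-1-m..<min n (2*n-1-m)}"

lemma digs_range:
  assumes B: "B \<in> Bset n h" and k: "k \<in> Iset n m"
  shows "B $$ (n+1+k, m+k+1-n) \<in> {0..h-1}"
  using k by (intro Bset_entry(2)[OF B]) auto

lemma char_poly_in_Pset:
  assumes B: "B \<in> Bset n h" and n: "n \<ge> 1" and h: "h \<ge> 1"
  shows "char_poly B \<in> Pset n h"
proof -
  let ?p = "char_poly B"
  let ?S = "\<lambda>m. (\<Sum>k\<in>Iset n m. h^k * B $$ (n+1+k, m+k+1-n))"
  have cf: "coeff ?p m = (if m = 2*n+1 then 1 else 0) - ?S m" for m
    by (rule coeff_formula[OF B n h])
  have big: "coeff ?p m = 0" if "m > 2*n+1" for m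
    using that unfolding cf by simp
  have top: "coeff ?p (2*n+1) = 1" unfolding cf by simp
  have deg: "degree ?p = 2*n+1"
  proof (rule antisym)
    show "degree ?p \<le> 2*n+1" by (rule degree_le) (use big in auto)
    show "2*n+1 \<le> degree ?p" by (rule le_degree) (use top in simp)
  qed
  have c2n: "coeff ?p (2*n) = 0" unfolding cf by simp
  have c2n1: "coeff ?p (2*n-1) = 0" unfolding cf using n by simp
  have A: "- coeff ?p (2*n-k) \<in> {0..h^(k-1)-1}" if k: "k \<in> {2..n+1}" for k
  proof -
    have I: "Iset n (2*n-k) = {0..<k-1}" using k by auto
    have "- coeff ?p (2*n-k) = (\<Sum>j\<in>{0..<k-1}. h^j * B $$ (n+1+j, (2*n-k)+j+1-n))"
      unfolding cf using k n I by auto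
    moreover have dr: "\<And>j. j \<in> {0..<k-1} \<Longrightarrow> B $$ (n+1+j, (2*n-k)+j+1-n) \<in> {0..h-1}"
      using digs_range[OF B, of _ "2*n-k"] I by blast
    obtain c where "c \<in> {0..h^(k-1-0)-1}"
      "(\<Sum>j\<in>{0..<k-1}. h^j * B $$ (n+1+j, (2*n-k)+j+1-n)) = c * h^0"
      using digL_bound[OF h, of 0 "k-1" "\<lambda>j. B $$ (n+1+j, (2*n-k)+j+1-n)", OF _ dr] by auto
    ultimately show ?thesis by simp
  qed
  have C: "\<exists>c\<in>{0..h^(n-k+1)-1}. - coeff ?p (n-k) = c * h^(k-1)" if k: "k \<in> {2..n}" for k
  proof -
    have I: "Iset n (n-k) = {k-1..<n}" using k by auto
    have "- coeff ?p (n-k) = (\<Sum>j\<in>{k-1..<n}. h^j * B $$ (n+1+j, (n-k)+j+1-n))"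
      unfolding cf using k n I by auto
    moreover have dr: "\<And>j. j \<in> {k-1..<n} \<Longrightarrow> B $$ (n+1+j, (n-k)+j+1-n) \<in> {0..h-1}"
      using digs_range[OF B, of _ "n-k"] I by blast
    have "k-1 \<le> n" using k by auto
    from digL_bound[where x="\<lambda>j. B $$ (n+1+j, (n-k)+j+1-n)", OF h this dr] obtain c where "c \<in> {0..h^(n-(k-1))-1}"
      "(\<Sum>j\<in>{k-1..<n}. h^j * B $$ (n+1+j, (n-k)+j+1-n)) = c * h^(k-1)"
      by blast
    moreover have "n-(k-1) = n-k+1" "Suc n - k = Suc (n-k)" using k by auto
    ultimately have "- coeff ?p (n-k) = c * h^(k-1)" "c \<in> {0..h^(n-k+1)-1}" by auto
    then show ?thesis by blast
  qed
  show ?thesis unfolding Pset_def using deg top c2n c2n1 A C by blast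
qed


lemma char_poly_inj:
  assumes n: "n \<ge> 1" and h: "h \<ge> 1"
  shows "inj_on char_poly (Bset n h)"
proof (rule inj_onI)
  fix B1 B2 assume B1: "B1 \<in> Bset n h" and B2: "B2 \<in> Bset n h" and eq: "char_poly B1 = char_poly B2"
  have C1: "B1 \<in> carrier_mat (2*n+1) (2*n+1)" using Bset_carrier[OF B1] .
  have C2: "B2 \<in> carrier_mat (2*n+1) (2*n+1)" using Bset_carrier[OF B2] .
  show "B1 = B2"
  proof (rule eq_matI)
    fix r s assume "r < dim_row B2" "s < dim_col B2"
    then have r: "r < 2*n+1" and s: "s < 2*n+1" using C2 by auto
    show "B1 $$ (r,s) = B2 $$ (r,s)"
    proof (cases "n+1 \<le> r \<and> s < n")
      case True
      define m where "m = s + 2*n - r"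
      define k where "k = r - n - 1"
      have kI: "k \<in> Iset n m" using True r unfolding m_def k_def by auto
      have rk: "n+1+k = r" "m+k+1-n = s" using True r unfolding m_def k_def by auto
      have eqS: "(\<Sum>k\<in>Iset n m. h^k * B1 $$ (n+1+k, m+k+1-n)) = (\<Sum>k\<in>Iset n m. h^k * B2 $$ (n+1+k, m+k+1-n))"
        using coeff_formula[OF B1 n h, of m] coeff_formula[OF B2 n h, of m] eq by simp
      have "B1 $$ (n+1+k, m+k+1-n) = B2 $$ (n+1+k, m+k+1-n)"
        apply (rule digL_unique[where x="\<lambda>k. B1 $$ (n+1+k, m+k+1-n)" and y="\<lambda>k. B2 $$ (n+1+k, m+k+1-n)"
              and L="n-1-m" and U="min n (2*n-1-m)"])
        using h digs_range[OF B1, of _ m] digs_range[OF B2, of _ m] kI eqS by auto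
      then show ?thesis unfolding rk .
    next
      case False
      then show ?thesis using Bset_entry(1)[OF B1 r s] Bset_entry(1)[OF B2 r s] by (simp split: if_splits)
    qed
  qed (use C1 C2 in auto)
qed


definition Bof :: "nat \<Rightarrow> int \<Rightarrow> int poly \<Rightarrow> int mat" where
  "Bof n h p = mat (2*n+1) (2*n+1) (\<lambda>(r,s). if s = Suc r \<and> r \<le> n then 1
     else if s = Suc r \<and> n+1 \<le> r then h
     else if n+1 \<le> r \<and> s < n then (- coeff p (s+2*n-r)) div h^(r-n-1) mod h else 0)"

lemma Bof_in:
  assumes h: "h \<ge> 1"
  shows "Bof n h p \<in> Bset n h"
  unfolding Bset_def
proof (intro CollectI conjI ballI)
  show "Bof n h p \<in> carrier_mat (2*n+1) (2*n+1)" unfolding Bof_def by simp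
  fix i j assume i: "i \<in> {-int n..int n}" and j: "j \<in> {-int n..int n}"
  define r where "r = nat (i + int n)"
  define s where "s = nat (j + int n)"
  have ir: "i = int r - int n" "j = int s - int n" "r < 2*n+1" "s < 2*n+1"
    using i j unfolding r_def s_def by auto
  have e: "ent n (Bof n h p) i j = (if s = Suc r \<and> r \<le> n then 1
     else if s = Suc r \<and> n+1 \<le> r then h
     else if n+1 \<le> r \<and> s < n then (- coeff p (s+2*n-r)) div h^(r-n-1) mod h else 0)"
    unfolding ent_def Bof_def r_def[symmetric] s_def[symmetric] using ir by simp
  have m: "(- coeff p (s+2*n-r)) div h^(r-n-1) mod h \<in> {0..h-1}" using h by simp
  show "if j = i + 1 \<and> i \<le> 0 then ent n (Bof n h p) i j = 1
        else if j = i + 1 \<and> 1 \<le> i \<and> i \<le> int n - 1 then ent n (Bof n h p) i j = h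
        else if 1 \<le> i \<and> j \<le> -1 then ent n (Bof n h p) i j \<in> {0..h-1}
        else ent n (Bof n h p) i j = 0"
    unfolding e using ir m by auto
qed

lemma Bof_entry:
  assumes k: "k \<in> Iset n m"
  shows "Bof n h p $$ (n+1+k, m+k+1-n) = (- coeff p m) div h^k mod h"
proof -
  have "m+k+1-n + 2*n - (n+1+k) = m" "n+1+k-n-1 = k" using k by auto
  then show ?thesis using k unfolding Bof_def by auto
qed

lemma Bof_char:
  assumes p: "p \<in> Pset n h" and n: "n \<ge> 1" and h: "h \<ge> 1"
  shows "char_poly (Bof n h p) = p"
proof (rule poly_eqI)
  fix m
  let ?B = "Bof n h p"
  have B: "?B \<in> Bset n h" by (rule Bof_in[OF h])
  have P: "degree p = 2*n+1" "coeff p (2*n+1) = 1" "coeff p (2*n) = 0" "coeff p (2*n-1) = 0"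
    "\<And>k. k\<in>{2..n+1} \<Longrightarrow> - coeff p (2*n-k) \<in> {0..h^(k-1)-1}"
    "\<And>k. k\<in>{2..n} \<Longrightarrow> \<exists>c\<in>{0..h^(n-k+1)-1}. - coeff p (n-k) = c * h^(k-1)"
    using p unfolding Pset_def by auto
  have cf: "coeff (char_poly ?B) m = (if m = 2*n+1 then 1 else 0) -
     (\<Sum>k\<in>Iset n m. h^k * ((- coeff p m) div h^k mod h))"
  proof -
    have "(\<Sum>k\<in>Iset n m. h^k * ?B $$ (n+1+k, m+k+1-n)) = (\<Sum>k\<in>Iset n m. h^k * ((- coeff p m) div h^k mod h))"
      by (rule sum.cong[OF refl]) (simp only: Bof_entry)
    then show ?thesis unfolding coeff_formula[OF B n h] by simp
  qed
  consider "m > 2*n+1" | "m = 2*n+1" | "m = 2*n" | "m = 2*n-1" | "n-1 \<le> m" "m \<le> 2*n-2" | "m < n-1"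
    using n by linarith
  then show "coeff (char_poly ?B) m = coeff p m"
  proof cases
    case 1
    then show ?thesis unfolding cf using P(1) by (simp add: coeff_eq_0)
  next
    case 2
    then show ?thesis unfolding cf using P(2) by simp
  next
    case 3
    then show ?thesis unfolding cf using P(3) by simp
  next
    case 4
    then show ?thesis unfolding cf using P(4) n by simp
  next
    case 5
    define k0 where "k0 = 2*n - m"
    have k0: "k0 \<in> {2..n+1}" "m = 2*n-k0" using 5 n unfolding k0_def by auto
    have I: "Iset n m = {0..<k0-1}" using k0 by auto
    have a: "- coeff p m \<in> {0..h^(k0-1-0)-1}" using P(5)[OF k0(1)] k0(2) by simp
    have "(\<Sum>k\<in>{0..<k0-1}. h^k * ((- coeff p m * h^0) div h^k mod h)) = - coeff p m * h^0"
      by (rule digL_exist[OF h _ a]) simp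
    then show ?thesis unfolding cf I using k0 by simp
  next
    case 6
    define k0 where "k0 = n - m"
    have k0: "k0 \<in> {2..n}" "m = n-k0" using 6 n unfolding k0_def by auto
    have I: "Iset n m = {k0-1..<n}" using k0 by auto
    obtain c where c: "c \<in> {0..h^(n-k0+1)-1}" "- coeff p m = c * h^(k0-1)"
      using P(6)[OF k0(1)] k0(2) by auto
    have c': "c \<in> {0..h^(n-(k0-1))-1}" using c(1) k0 by (simp add: Suc_diff_le)
    have "(\<Sum>k\<in>{k0-1..<n}. h^k * ((c * h^(k0-1)) div h^k mod h)) = c * h^(k0-1)"
      by (rule digL_exist[OF h _ c']) (use k0 in auto)
    then show ?thesis unfolding cf I c(2)[symmetric] using k0 6 by simp
  qed
qed

theorem mainTheorem4:
  fixes n :: nat and h :: int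
  assumes "n \<ge> 1" and "h \<ge> 1"
  shows "bij_betw char_poly (Bset n h) (Pset n h)"
proof (rule bij_betw_imageI)
  show "inj_on char_poly (Bset n h)" by (rule char_poly_inj[OF assms])
  show "char_poly ` Bset n h = Pset n h"
  proof
    show "char_poly ` Bset n h \<subseteq> Pset n h" using char_poly_in_Pset[OF _ assms] by auto
    show "Pset n h \<subseteq> char_poly ` Bset n h"
    proof
      fix p assume p: "p \<in> Pset n h"
      then have "p = char_poly (Bof n h p)" using Bof_char[OF p assms] by simp
      then show "p \<in> char_poly ` Bset n h" using Bof_in[OF assms(2)] by blast
    qed
  qed
qed


end
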